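(* Let $(C,T,k)$ be a $(\rho,\alpha,n)$-coding gadget over $\mathbb{R}$ with $C\subseteq\mathbb{R}^N$, and let $Q_1,\dots,Q_m\in\mathbb{R}^{n\times n}$, $b_1,\dots,b_m\in\mathbb{R}$. Let $V\subseteq \mathbb{R}^{N\times N}\times\mathbb{R}$ be the set of pairs $(Y,z)$ satisfying $$Y\in C\otimes C,\quad Y=Y^T,\quad z=\tfrac1k\sum_{i\in[N]}Y[i,i],\quad Q_\ell(TYT^T)=z\,b_\ell\ \ \forall \ell\in[m].$$ Then: (i) if there exists $x\in\{0,1\}^n$ with $Q_\ell(xx^T)=b_\ell$ for all $\ell$, then $V$ contains a nonzero $(Y,z)$ with all entries in $\{0,1\}$ and $\|(Y,z)\|_0 = k^2+1\le \rho^2 d(C)^2+1$; (ii) if there is no $x\in\mathbb{R}^n$ with $Q_\ell(xx^T)=b_\ell$ for all $\ell$, then every nonzero $(Y,z)\in V$ satisfies $\|(Y,z)\|_0\ge \alpha\, d(C)^2$.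
   Context: For $Q,X$ square matrices of equal size, $Q(X):=\sum_{i,j}Q[i,j]X[i,j]$. $\|(Y,z)\|_0$ is the number of nonzero entries of $Y$ plus $1$ if $z\ne0$. For subspaces $U,W$, $U\otimes W$ is the space of matrices whose columns lie in $U$ and rows in $W$. $H^N_k := \{x\in\{0,1\}^N : \|x\|_0 = k\}$; $d(C):=\min_{u\in C\setminus\{0\}}\|u\|_0$; $C$ is $\alpha$-non-overlapping if for all linearly independent $u,v\in C$, $|\mathrm{supp}(u)\cup\mathrm{supp}(v)|\ge\alpha\, d(C)$. A triple $(C,T,k)$ is a $(\rho,\alpha,n)$-coding gadget over $\mathbb{R}$ if $C\subseteq\mathbb{R}^N$ is a subspace, $T\in\mathbb{R}^{n\times N}$, $k\le\rho\, d(C)$, $T(C\cap H^N_k)\supseteq\{0,1\}^n$, and $C$ is $\alpha$-non-overlapping. *)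

theory Defs
  imports "HOL-Analysis.Analysis"
begin

text \<open>Vectors in R^N are real^'N, matrices in R^(a x b) are real^'b^'a (row i = Y$i).\<close>

definition vsupp :: "real^'N \<Rightarrow> 'N set" where
  "vsupp u = {i. u $ i \<noteq> 0}"

definition min_dist :: "(real^'N) set \<Rightarrow> nat" where
  "min_dist C = (INF u \<in> C - {0}. card (vsupp u))"

definition non_overlapping :: "real \<Rightarrow> (real^'N) set \<Rightarrow> bool" where
  "non_overlapping \<alpha> C \<longleftrightarrow>
     (\<forall>u\<in>C. \<forall>v\<in>C. (u \<noteq> v \<and> independent {u, v}) \<longrightarrow>
        real (card (vsupp u \<union> vsupp v)) \<ge> \<alpha> * real (min_dist C))"

definition is01 :: "real^'n \<Rightarrow> bool" where
  "is01 x \<longleftrightarrow> (\<forall>i. x $ i \<in> {0, 1})"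

definition coding_gadget ::
  "real \<Rightarrow> real \<Rightarrow> (real^'N) set \<Rightarrow> real^'N^'n \<Rightarrow> nat \<Rightarrow> bool" where
  "coding_gadget \<rho> \<alpha> C T k \<longleftrightarrow>
     subspace C \<and>
     real k \<le> \<rho> * real (min_dist C) \<and>
     (\<forall>x::real^'n. is01 x \<longrightarrow>
        (\<exists>u\<in>C. is01 u \<and> card (vsupp u) = k \<and> T *v u = x)) \<and>
     non_overlapping \<alpha> C"

definition mat_pair :: "real^'n^'n \<Rightarrow> real^'n^'n \<Rightarrow> real" where
  "mat_pair Q X = (\<Sum>i\<in>UNIV. \<Sum>j\<in>UNIV. Q $ i $ j * X $ i $ j)"

definition outer :: "real^'n \<Rightarrow> real^'n^'n" where
  "outer x = (\<chi> i j. x $ i * x $ j)"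

definition tensor_sp :: "(real^'N) set \<Rightarrow> (real^'N^'N) set" where
  "tensor_sp C = {Y. (\<forall>j. (\<chi> i. Y $ i $ j) \<in> C) \<and> (\<forall>i. Y $ i \<in> C)}"

definition l0_pair :: "real^'N^'N \<Rightarrow> real \<Rightarrow> nat" where
  "l0_pair Y z = card {(i, j). Y $ i $ j \<noteq> 0} + (if z \<noteq> 0 then 1 else 0)"

definition relaxV ::
  "(real^'N) set \<Rightarrow> real^'N^'n \<Rightarrow> nat \<Rightarrow> nat \<Rightarrow> (nat \<Rightarrow> real^'n^'n) \<Rightarrow> (nat \<Rightarrow> real)
     \<Rightarrow> ((real^'N^'N) \<times> real) set" where
  "relaxV C T k m Q b = {(Y, z).
     Y \<in> tensor_sp C \<and> transpose Y = Y \<and>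
     z = (1 / real k) * (\<Sum>i\<in>UNIV. Y $ i $ i) \<and>
     (\<forall>l<m. mat_pair (Q l) (T ** Y ** transpose T) = z * b l)}"

end

theory Submission
  imports Defs
begin

lemma outer_T: "T ** outer u ** transpose T = outer (T *v u)"
  by (simp add: vec_eq_iff matrix_matrix_mult_def matrix_vector_mult_def outer_def
      transpose_def sum_product sum_distrib_left sum_distrib_right mult_ac)

lemma scale_T: fixes T :: "real^'N^'n" and M :: "real^'N^'N" shows "T ** (c *\<^sub>R M) ** transpose T = c *\<^sub>R (T ** M ** transpose T)"
  by (simp add: vec_eq_iff matrix_matrix_mult_def transpose_def sum_distrib_left sum_distrib_right mult_ac)

lemma mat_pair_scale: fixes c :: real shows "mat_pair Q (c *\<^sub>R M) = c * mat_pair Q M"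
  by (simp add: mat_pair_def sum_distrib_left mult_ac)

lemma mat_pair_outer_scale: fixes c :: real shows "mat_pair Q (outer (c *\<^sub>R x)) = c^2 * mat_pair Q (outer x)"
  by (simp add: mat_pair_def outer_def sum_distrib_left power2_eq_square mult_ac)

lemma min_dist_le:
  assumes "u \<in> C" "u \<noteq> 0" shows "min_dist C \<le> card (vsupp u)"
  unfolding min_dist_def by (rule cINF_lower) (use assms in auto)

lemma vsupp_zero: "vsupp u = {} \<Longrightarrow> u = 0"
  by (auto simp: vsupp_def vec_eq_iff)

lemma gadget_k_pos:
  assumes "coding_gadget \<rho> \<alpha> C (T::real^'N^'n) k" shows "k \<noteq> 0"
proof
  assume k0: "k = 0"
  have "is01 (\<chi> i. 1 :: real^'n)" by (simp add: is01_def)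
  then obtain u where u: "u \<in> C" "card (vsupp u) = k" "T *v u = (\<chi> i. 1)"
    using assms unfolding coding_gadget_def by blast
  have "u = 0" using u k0 by (intro vsupp_zero) (simp add: card_eq_0_iff)
  then have "(\<chi> i. 1 :: real^'n) = 0" using u by simp
  then show False by (simp add: vec_eq_iff)
qed

lemma part1:
  fixes C :: "(real^'N) set" and T :: "real^'N^'n" and k :: nat
    and \<rho> \<alpha> :: real and m :: nat
    and Q :: "nat \<Rightarrow> real^'n^'n" and b :: "nat \<Rightarrow> real"
  assumes gadget: "coding_gadget \<rho> \<alpha> C T k"
    and x01: "is01 x" and xQ: "\<forall>l<m. mat_pair (Q l) (outer x) = b l"
  shows "\<exists>(Y, z) \<in> relaxV C T k m Q b. (Y, z) \<noteq> (0, 0) \<and>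
               (\<forall>i j. Y $ i $ j \<in> {0, 1}) \<and> z \<in> {0, 1} \<and>
               l0_pair Y z = k ^ 2 + 1 \<and>
               real (k ^ 2 + 1) \<le> \<rho> ^ 2 * real (min_dist C) ^ 2 + 1"
proof -
  have k0: "k \<noteq> 0" using gadget_k_pos[OF gadget] .
  have sub: "subspace C" and kle: "real k \<le> \<rho> * real (min_dist C)"
    using gadget unfolding coding_gadget_def by auto
  obtain u where u: "u \<in> C" "is01 u" "card (vsupp u) = k" "T *v u = x"
    using gadget x01 unfolding coding_gadget_def by blast
  have u01: "\<And>i. u $ i = 0 \<or> u $ i = 1" using u(2) by (auto simp: is01_def)
  define Y where "Y = outer u"
  have tens: "Y \<in> tensor_sp C"
  proof -
    have "\<And>j. (\<chi> i. Y $ i $ j) = u $ j *\<^sub>R u"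
      by (simp add: Y_def outer_def vec_eq_iff mult.commute)
    moreover have "\<And>i. Y $ i = u $ i *\<^sub>R u"
      by (simp add: Y_def outer_def vec_eq_iff)
    ultimately show ?thesis unfolding tensor_sp_def
      using sub u(1) by (simp add: subspace_scale)
  qed
  have symm: "transpose Y = Y"
    by (simp add: Y_def outer_def transpose_def vec_eq_iff mult.commute)
  have sq: "\<And>i. u $ i * u $ i = (if i \<in> vsupp u then 1 else 0)"
    using u01 by (metis (mono_tags) mem_Collect_eq mult_1 mult_zero_left vsupp_def)
  have tr: "(\<Sum>i\<in>UNIV. Y $ i $ i) = real k"
  proof -
    have "(\<Sum>i\<in>UNIV. Y $ i $ i) = (\<Sum>i\<in>UNIV. if i \<in> vsupp u then 1 else 0)"
      by (simp add: Y_def outer_def sq)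
    also have "\<dots> = real (card (vsupp u))"
      by (simp add: sum.If_cases)
    finally show ?thesis using u(3) by simp
  qed
  have z1: "(1 / real k) * (\<Sum>i\<in>UNIV. Y $ i $ i) = 1" using tr k0 by simp
  have cons: "\<forall>l<m. mat_pair (Q l) (T ** Y ** transpose T) = 1 * b l"
    using xQ by (simp add: Y_def outer_T u(4))
  have inV: "(Y, 1) \<in> relaxV C T k m Q b"
    unfolding relaxV_def using tens symm z1 cons by simp
  have ent: "\<forall>i j. Y $ i $ j \<in> {0, 1}"
  proof (intro allI)
    fix i j
    show "Y $ i $ j \<in> {0, 1}" using u01[of i] u01[of j] by (auto simp: Y_def outer_def)
  qed
  have nz: "{(i, j). Y $ i $ j \<noteq> 0} = vsupp u \<times> vsupp u"
    by (auto simp: Y_def outer_def vsupp_def)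
  have l0: "l0_pair Y 1 = k ^ 2 + 1"
    unfolding l0_pair_def nz card_cartesian_product u(3) by (simp add: power2_eq_square)
  have "real k ^ 2 \<le> (\<rho> * real (min_dist C)) ^ 2"
    using kle by (intro power_mono) auto
  then have ineq: "real (k ^ 2 + 1) \<le> \<rho> ^ 2 * real (min_dist C) ^ 2 + 1"
    by (simp add: power_mult_distrib)
  show ?thesis
    apply (rule bexI[of _ "(Y, 1)"])
    using inV ent l0 ineq by auto
qed

lemma part2:
  fixes C :: "(real^'N) set" and T :: "real^'N^'n" and k :: nat
    and \<rho> \<alpha> :: real and m :: nat
    and Q :: "nat \<Rightarrow> real^'n^'n" and b :: "nat \<Rightarrow> real"
  assumes gadget: "coding_gadget \<rho> \<alpha> C T k"
    and nox: "\<not> (\<exists>x::real^'n. \<forall>l<m. mat_pair (Q l) (outer x) = b l)"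
    and YV: "(Y, z) \<in> relaxV C T k m Q b" and nz: "(Y, z) \<noteq> (0, 0)"
  shows "real (l0_pair Y z) \<ge> \<alpha> * real (min_dist C) ^ 2"
proof -
  have k0: "k \<noteq> 0" using gadget_k_pos[OF gadget] .
  have nonov: "non_overlapping \<alpha> C" using gadget unfolding coding_gadget_def by auto
  have tens: "Y \<in> tensor_sp C" and symm: "transpose Y = Y"
    and zdef: "z = (1 / real k) * (\<Sum>i\<in>UNIV. Y $ i $ i)"
    and cons: "\<forall>l<m. mat_pair (Q l) (T ** Y ** transpose T) = z * b l"
    using YV unfolding relaxV_def by auto
  have rows: "\<And>i. Y $ i \<in> C" and cols: "\<And>j. (\<chi> i. Y $ i $ j) \<in> C"
    using tens unfolding tensor_sp_def by auto
  have sym: "Y $ i $ j = Y $ j $ i" for i j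
  proof -
    have "transpose Y $ j $ i = Y $ j $ i" using symm by simp
    then show ?thesis by (simp add: transpose_def)
  qed
  have Ynz: "Y \<noteq> 0"
  proof
    assume "Y = 0"
    then have "z = 0" using zdef by simp
    with \<open>Y = 0\<close> nz show False by simp
  qed
  then obtain i0 where i0: "Y $ i0 \<noteq> 0" by (auto simp: vec_eq_iff)
  show ?thesis
  proof (cases "\<exists>i1 i2. Y $ i1 \<noteq> Y $ i2 \<and> independent {Y $ i1, Y $ i2}")
    case True
    then obtain i1 i2 where ii: "Y $ i1 \<noteq> Y $ i2" "independent {Y $ i1, Y $ i2}" by blast
    define J where "J = vsupp (Y $ i1) \<union> vsupp (Y $ i2)"
    define col where "col j = (\<chi> i. Y $ i $ j)" for j
    have cardJ: "real (card J) \<ge> \<alpha> * real (min_dist C)"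
    proof -
      have "\<forall>u\<in>C. \<forall>v\<in>C. (u \<noteq> v \<and> independent {u, v}) \<longrightarrow>
        real (card (vsupp u \<union> vsupp v)) \<ge> \<alpha> * real (min_dist C)"
        using nonov unfolding non_overlapping_def .
      then have "(Y $ i1 \<noteq> Y $ i2 \<and> independent {Y $ i1, Y $ i2}) \<longrightarrow>
        real (card (vsupp (Y $ i1) \<union> vsupp (Y $ i2))) \<ge> \<alpha> * real (min_dist C)"
        using rows[of i1] rows[of i2] by blast
      then show ?thesis using ii unfolding J_def by blast
    qed
    have colnz: "col j \<noteq> 0" if "j \<in> J" for j
    proof
      assume "col j = 0"
      then have "Y $ i1 $ j = 0" "Y $ i2 $ j = 0"
        unfolding col_def by (metis vec_lambda_beta zero_index, metis vec_lambda_beta zero_index)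
      then show False using that by (auto simp: J_def vsupp_def)
    qed
    have cold: "min_dist C \<le> card (vsupp (col j))" if "j \<in> J" for j
      using min_dist_le[OF _ colnz[OF that]] cols unfolding col_def by blast
    define S' where "S' = (\<lambda>(j, i). (i, j)) ` (SIGMA j:J. vsupp (col j))"
    have "card S' = card (SIGMA j:J. vsupp (col j))"
      unfolding S'_def by (rule card_image) (auto simp: inj_on_def)
    also have "\<dots> = (\<Sum>j\<in>J. card (vsupp (col j)))"
      by (rule card_SigmaI) auto
    also have "\<dots> \<ge> card J * min_dist C"
      using sum_bounded_below[of J "min_dist C" "\<lambda>j. card (vsupp (col j))"] cold by simp
    finally have c1: "card J * min_dist C \<le> card S'" .
    have "S' \<subseteq> {(i, j). Y $ i $ j \<noteq> 0}"
      by (auto simp: S'_def col_def vsupp_def)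
    then have "card S' \<le> card {(i, j). Y $ i $ j \<noteq> 0}"
      by (intro card_mono) auto
    then have c2: "card J * min_dist C \<le> l0_pair Y z"
      using c1 unfolding l0_pair_def by linarith
    have "\<alpha> * real (min_dist C) ^ 2 = (\<alpha> * real (min_dist C)) * real (min_dist C)"
      by (simp add: power2_eq_square)
    also have "\<dots> \<le> real (card J) * real (min_dist C)"
      using cardJ by (intro mult_right_mono) auto
    also have "\<dots> \<le> real (l0_pair Y z)"
      using c2 by (metis of_nat_le_iff of_nat_mult)
    finally show ?thesis .
  next
    case False
    define u where "u = Y $ i0"
    have unz: "u \<noteq> 0" using i0 u_def by simp
    have "\<exists>c. Y $ i = c *\<^sub>R u" for i
    proof (rule ccontr)
      assume nc: "\<not> (\<exists>c. Y $ i = c *\<^sub>R u)"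
      then have ne: "Y $ i \<noteq> u" by (metis scaleR_one)
      have "Y $ i \<notin> span {u}" using nc by (auto simp: span_singleton)
      then have "independent {Y $ i, u}"
        using ne unz by (simp add: independent_insert)
      then show False using False ne unfolding u_def by auto
    qed
    then obtain c where c: "\<And>i. Y $ i = c i *\<^sub>R u" by metis
    obtain p where p: "u $ p \<noteq> 0" using unz by (auto simp: vec_eq_iff)
    define lam where "lam = c p / u $ p"
    have ci: "c i = lam * u $ i" for i
    proof -
      have "c i * u $ p = c p * u $ i"
        using sym[of i p] c[of i] c[of p] by simp
      then show ?thesis using p unfolding lam_def by (simp add: field_simps)
    qed
    have Yeq: "Y = lam *\<^sub>R outer u"
      by (simp add: vec_eq_iff outer_def c ci)
    have lnz: "lam \<noteq> 0" using Ynz Yeq by auto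
    define S where "S = (\<Sum>i\<in>UNIV. u $ i * u $ i)"
    have "u $ p * u $ p \<le> S"
      unfolding S_def by (rule member_le_sum) auto
    moreover have "u $ p * u $ p > 0" using p by (simp add: zero_less_mult_iff linorder_neq_iff disj_commute)
    ultimately have Spos: "S > 0" by linarith
    have zeq: "z = lam * S / real k"
      unfolding zdef Yeq S_def by (simp add: outer_def sum_distrib_left mult_ac sum_divide_distrib)
    define x where "x = sqrt (real k / S) *\<^sub>R (T *v u)"
    have "mat_pair (Q l) (outer x) = b l" if "l < m" for l
    proof -
      have "lam * mat_pair (Q l) (outer (T *v u)) = lam * (S / real k * b l)"
        using cons that zeq unfolding Yeq scale_T outer_T mat_pair_scale by simp
      then have e: "mat_pair (Q l) (outer (T *v u)) = S / real k * b l"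
        using lnz mult_left_cancel by blast
      have "mat_pair (Q l) (outer x) = (sqrt (real k / S))^2 * (S / real k * b l)"
        unfolding x_def mat_pair_outer_scale e ..
      also have "\<dots> = b l" using Spos k0 by simp
      finally show ?thesis .
    qed
    then show ?thesis using nox by blast
  qed
qed

theorem mainTheorem10:
  fixes C :: "(real^'N) set" and T :: "real^'N^'n" and k :: nat
    and \<rho> \<alpha> :: real and m :: nat
    and Q :: "nat \<Rightarrow> real^'n^'n" and b :: "nat \<Rightarrow> real"
  assumes gadget: "coding_gadget \<rho> \<alpha> C T k"
  shows "((\<exists>x::real^'n. is01 x \<and> (\<forall>l<m. mat_pair (Q l) (outer x) = b l)) \<longrightarrow>
            (\<exists>(Y, z) \<in> relaxV C T k m Q b. (Y, z) \<noteq> (0, 0) \<and>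
               (\<forall>i j. Y $ i $ j \<in> {0, 1}) \<and> z \<in> {0, 1} \<and>
               l0_pair Y z = k ^ 2 + 1 \<and>
               real (k ^ 2 + 1) \<le> \<rho> ^ 2 * real (min_dist C) ^ 2 + 1))
       \<and> ((\<not> (\<exists>x::real^'n. \<forall>l<m. mat_pair (Q l) (outer x) = b l)) \<longrightarrow>
            (\<forall>(Y, z) \<in> relaxV C T k m Q b. (Y, z) \<noteq> (0, 0) \<longrightarrow>
               real (l0_pair Y z) \<ge> \<alpha> * real (min_dist C) ^ 2))"
  using part1[OF gadget] part2[OF gadget] by blast

end
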